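(* Let $\mathcal{C}=\{\theta\in\mathbb{R}^n:\|\theta\|_2\le1\}$, let $\theta^*\notin\mathcal{C}$, $\sigma>0$, $Y\sim N(\theta^*,\sigma^2I_n)$, and $\hat\theta(Y)=\Pi_{\mathcal{C}}(Y)$. Then $$\lim_{\sigma\downarrow0}\frac{1}{\sigma^2}M(\hat\theta,\theta^* )=\frac{n-1}{\|\theta^*\|^2},\qquad \lim_{\sigma\downarrow0}\frac{1}{\sigma^2}E(\hat\theta,\theta^* )=\frac{n-1}{\|\theta^*\|}.$$
   Context: $\Pi_{\mathcal{C}}$ is Euclidean projection. Misspecified risk: $M(\hat\theta,\theta^* )=\mathbb{E}\|\hat\theta(Y)-\Pi_{\mathcal{C}}(\theta^* )\|^2$; excess risk: $E(\hat\theta,\theta^* )=\mathbb{E}\|\hat\theta(Y)-\theta^*\|^2-\|\Pi_{\mathcal{C}}(\theta^* )-\theta^*\|^2$. *)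

theory Defs
  imports "HOL-Probability.Probability"
begin

definition gaussian_density :: "'a::euclidean_space \<Rightarrow> real \<Rightarrow> 'a \<Rightarrow> real" where
  "gaussian_density mu \<sigma> y =
     (2 * pi * \<sigma>\<^sup>2) powr (- real DIM('a) / 2) * exp (- (norm (y - mu))\<^sup>2 / (2 * \<sigma>\<^sup>2))"

definition gaussian :: "'a::euclidean_space \<Rightarrow> real \<Rightarrow> 'a measure" where
  "gaussian mu \<sigma> = density lborel (\<lambda>y. ennreal (gaussian_density mu \<sigma> y))"

definition unit_ball_C :: "'a::euclidean_space set" where
  "unit_ball_C = cball 0 1"

definition proj_C :: "'a::euclidean_space \<Rightarrow> 'a" where
  "proj_C = closest_point unit_ball_C"

definition misspec_risk :: "('a::euclidean_space \<Rightarrow> 'a) \<Rightarrow> 'a \<Rightarrow> real \<Rightarrow> real" where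
  "misspec_risk est \<theta> \<sigma> = (\<integral>y. (norm (est y - proj_C \<theta>))\<^sup>2 \<partial>gaussian \<theta> \<sigma>)"

definition excess_risk :: "('a::euclidean_space \<Rightarrow> 'a) \<Rightarrow> 'a \<Rightarrow> real \<Rightarrow> real" where
  "excess_risk est \<theta> \<sigma> = (\<integral>y. (norm (est y - \<theta>))\<^sup>2 \<partial>gaussian \<theta> \<sigma>) - (norm (proj_C \<theta> - \<theta>))\<^sup>2"

end

theory Submission
  imports Defs
begin


lemma proj_C_outside:
  fixes y :: "'a::euclidean_space"
  assumes "norm y > 1"
  shows "proj_C y = (1 / norm y) *\<^sub>R y"
proof -
  have "(1 / norm y) *\<^sub>R y = closest_point unit_ball_C y"
  proof (rule closest_point_unique)
    show "convex (unit_ball_C :: 'a set)" "closed (unit_ball_C :: 'a set)" by (auto simp: unit_ball_C_def)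
    show "(1 / norm y) *\<^sub>R y \<in> unit_ball_C" using assms by (auto simp: unit_ball_C_def)
    show "\<forall>z\<in>unit_ball_C. dist y ((1 / norm y) *\<^sub>R y) \<le> dist y z"
    proof
      fix z :: 'a assume "z \<in> unit_ball_C"
      hence z: "norm z \<le> 1" by (auto simp: unit_ball_C_def)
      have "y - (1 / norm y) *\<^sub>R y = (1 - 1/norm y) *\<^sub>R y" by (simp add: algebra_simps)
      hence "dist y ((1 / norm y) *\<^sub>R y) = norm ((1 - 1/norm y) *\<^sub>R y)" by (simp add: dist_norm)
      also have "\<dots> = (1 - 1/norm y) * norm y" proof -
        have "1 - 1/norm y \<ge> 0" using assms by (simp add: divide_le_eq)
        thus ?thesis by (simp only: norm_scaleR abs_of_nonneg)
      qed
      also have "\<dots> = norm y - 1" using assms by (auto simp add: field_simps)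
      also have "\<dots> \<le> norm y - norm z" using z by simp
      also have "\<dots> \<le> dist y z" by (simp add: dist_norm norm_triangle_ineq2)
      finally show "dist y ((1 / norm y) *\<^sub>R y) \<le> dist y z" .
    qed
  qed
  thus ?thesis by (simp add: proj_C_def)
qed

lemma proj_C_lip: "dist (proj_C x) (proj_C (y::'a::euclidean_space)) \<le> dist x y"
  unfolding proj_C_def unit_ball_C_def by (rule closest_point_lipschitz) auto

lemma proj_C_in: "norm (proj_C (x::'a::euclidean_space)) \<le> 1"
  using closest_point_in_set[of "unit_ball_C::'a set" x] by (auto simp: proj_C_def unit_ball_C_def)

lemma proj_C_cont: "continuous_on UNIV (proj_C :: 'a::euclidean_space \<Rightarrow> 'a)"
  unfolding proj_C_def unit_ball_C_def by (rule continuous_on_closest_point) auto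

lemma proj_C_meas[measurable]: "(proj_C :: 'a::euclidean_space \<Rightarrow> 'a) \<in> borel_measurable borel"
  using proj_C_cont by (rule borel_measurable_continuous_onI)

lemma gd_meas[measurable]: "gaussian_density (mu::'a::euclidean_space) s \<in> borel_measurable borel"
  unfolding gaussian_density_def by measurable

lemma gd_nonneg: "gaussian_density mu s y \<ge> 0"
  unfolding gaussian_density_def by simp



lemma gd_scale:
  fixes z :: "'a::euclidean_space"
  assumes s: "\<sigma> > 0"
  shows "\<sigma> ^ DIM('a) * gaussian_density \<theta> \<sigma> (\<theta> + \<sigma> *\<^sub>R z) = gaussian_density 0 1 z"
proof -
  have e: "(norm (\<sigma> *\<^sub>R z))\<^sup>2 / (2 * \<sigma>\<^sup>2) = (norm z)\<^sup>2 / 2" using s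
    by (simp add: power_mult_distrib)
  have p: "\<sigma> ^ DIM('a) * (2 * pi * \<sigma>\<^sup>2) powr (- real DIM('a) / 2) = (2 * pi) powr (- real DIM('a) / 2)"
  proof -
    have "(2 * pi * \<sigma>\<^sup>2) powr (- real DIM('a) / 2) = (2*pi) powr (- real DIM('a) / 2) * (\<sigma> powr 2) powr (- real DIM('a) / 2)"
      using s by (simp add: powr_mult powr_realpow)
    also have "(\<sigma> powr 2) powr (- real DIM('a) / 2) = \<sigma> powr (- real DIM('a))"
      by (simp add: powr_powr)
    finally have "\<sigma> ^ DIM('a) * (2 * pi * \<sigma>\<^sup>2) powr (- real DIM('a) / 2) =
       (2*pi) powr (- real DIM('a) / 2) * (\<sigma> powr real DIM('a) * \<sigma> powr (- real DIM('a)))"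
      using s by (simp add: powr_realpow)
    also have "\<sigma> powr real DIM('a) * \<sigma> powr (- real DIM('a)) = 1"
      using s by (simp add: powr_add[symmetric])
    finally show ?thesis by simp
  qed
  show ?thesis unfolding gaussian_density_def using e p
    by (simp add: mult.assoc[symmetric])
qed

lemma gauss_change:
  fixes f :: "'a::euclidean_space \<Rightarrow> real" and \<theta> :: 'a
  assumes s: "\<sigma> > 0" and f[measurable]: "f \<in> borel_measurable borel"
  shows "(\<integral>y. f y \<partial>gaussian \<theta> \<sigma>) = (\<integral>z. gaussian_density 0 1 z * f (\<theta> + \<sigma> *\<^sub>R z) \<partial>lborel)"
proof -
  let ?T = "\<lambda>x::'a. \<theta> + \<sigma> *\<^sub>R x"
  let ?g = "\<lambda>y. gaussian_density \<theta> \<sigma> y * f y"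
  have eq: "lborel = density (distr lborel borel ?T) (\<lambda>_. \<bar>\<sigma>\<bar>^DIM('a))"
    using s by (intro lborel_affine) simp
  have "(\<integral>y. f y \<partial>gaussian \<theta> \<sigma>) = (\<integral>y. ?g y \<partial>lborel)"
    unfolding gaussian_def by (subst integral_density) (auto simp: gd_nonneg)
  also have "\<dots> = (\<integral>y. ?g y \<partial>density (distr lborel borel ?T) (\<lambda>_. \<bar>\<sigma>\<bar>^DIM('a)))"
    using eq by metis
  also have "\<dots> = (\<integral>y. \<bar>\<sigma>\<bar>^DIM('a) * ?g y \<partial>distr lborel borel ?T)"
    by (subst integral_density) auto
  also have "\<dots> = (\<integral>z. \<bar>\<sigma>\<bar>^DIM('a) * ?g (?T z) \<partial>lborel)"
    by (subst integral_distr) auto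
  also have "\<dots> = (\<integral>z. gaussian_density 0 1 z * f (\<theta> + \<sigma> *\<^sub>R z) \<partial>lborel)"
    using s gd_scale[OF s, of \<theta>] by (simp add: mult.assoc[symmetric])
  finally show ?thesis .
qed

lemma gd_prod:
  fixes z :: "'a::euclidean_space"
  shows "gaussian_density 0 1 z = (\<Prod>b\<in>Basis. std_normal_density (z \<bullet> b))"
proof -
  have n: "(norm z)\<^sup>2 = (\<Sum>b\<in>Basis. (z \<bullet> b)\<^sup>2)"
    unfolding power2_norm_eq_inner by (subst euclidean_inner) (simp add: power2_eq_square)
  have "(\<Prod>b\<in>Basis. std_normal_density (z \<bullet> b)) = (\<Prod>b\<in>(Basis::'a set). (1 / sqrt (2*pi))) * (\<Prod>b\<in>Basis. exp (- (z \<bullet> b)\<^sup>2 / 2))"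
    unfolding std_normal_density_def by (simp only: prod.distrib)
  also have "(\<Prod>b\<in>Basis. exp (- (z \<bullet> b)\<^sup>2 / 2)) = exp (- (norm z)\<^sup>2 / 2)"
    unfolding n by (simp add: exp_sum[symmetric] sum_negf sum_divide_distrib)
  also have "(\<Prod>b\<in>(Basis::'a set). (1 / sqrt (2*pi))) = (2 * pi) powr (- real DIM('a) / 2)"
  proof -
    have "(\<Prod>b\<in>(Basis::'a set). (1 / sqrt (2*pi))) = (1 / sqrt (2*pi)) ^ DIM('a)" by simp
    also have "\<dots> = ((2*pi) powr (-1/2)) powr real DIM('a)"
      by (simp add: powr_realpow powr_minus_divide powr_half_sqrt)
    also have "\<dots> = (2 * pi) powr (- real DIM('a) / 2)" by (simp add: powr_powr)
    finally show ?thesis .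
  qed
  finally show ?thesis unfolding gaussian_density_def by simp
qed



lemma sum_basis_inner:
  fixes f :: "'a::euclidean_space \<Rightarrow> real"
  assumes "b \<in> Basis"
  shows "(\<Sum>b'\<in>Basis. f b' *\<^sub>R b') \<bullet> b = f b"
  using assms by (simp add: inner_sum_left inner_Basis if_distrib cong: if_cong)

lemma moment_prod:
  fixes k :: "'a::euclidean_space \<Rightarrow> nat"
  shows "integrable lborel (\<lambda>z::'a. \<Prod>b\<in>Basis. std_normal_density (z \<bullet> b) * (z \<bullet> b) ^ k b)"
    and "(\<integral>z. (\<Prod>b\<in>Basis. std_normal_density (z \<bullet> b) * (z \<bullet> b) ^ k b) \<partial>(lborel::'a measure))
         = (\<Prod>b\<in>Basis. \<integral>x. std_normal_density x * x ^ k b \<partial>lborel)"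
proof -
  interpret product_sigma_finite "\<lambda>_::'a. lborel::real measure" by standard
  let ?E = "\<lambda>f. \<Sum>b\<in>(Basis::'a set). f b *\<^sub>R b"
  let ?F = "\<lambda>z::'a. \<Prod>b\<in>Basis. std_normal_density (z \<bullet> b) * (z \<bullet> b) ^ k b"
  have E[measurable]: "?E \<in> measurable (\<Pi>\<^sub>M b\<in>Basis. lborel) borel" by measurable
  have F[measurable]: "?F \<in> borel_measurable borel" by measurable
  have FE: "?F (?E f) = (\<Prod>b\<in>Basis. std_normal_density (f b) * (f b) ^ k b)" for f
    by (intro prod.cong refl) (simp add: sum_basis_inner)
  have int: "integrable (\<Pi>\<^sub>M b\<in>Basis. lborel) (\<lambda>f. \<Prod>b\<in>Basis. std_normal_density (f b) * (f b) ^ k b)"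
    by (rule product_integrable_prod) (auto intro: integrable_std_normal_moment)
  show "integrable lborel ?F"
    by (subst lborel_eq, subst integrable_distr_eq[OF E F]) (simp add: FE int)
  show "(\<integral>z. ?F z \<partial>lborel) = (\<Prod>b\<in>Basis. \<integral>x. std_normal_density x * x ^ k b \<partial>lborel)"
    by (subst lborel_eq, subst integral_distr[OF E F])
       (simp add: FE product_integral_prod[where f="\<lambda>b x. std_normal_density x * x ^ k b"] integrable_std_normal_moment)
qed



lemma std_m0: "(\<integral>x. std_normal_density x * x ^ 0 \<partial>lborel) = 1"
  using integral_std_normal_moment_even[of 0] by simp
lemma std_m1: "(\<integral>x. std_normal_density x * x ^ 1 \<partial>lborel) = 0"
  using integral_std_normal_moment_odd[of 0] by simp
lemma std_m2: "(\<integral>x. std_normal_density x * x ^ 2 \<partial>lborel) = 1"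
  using integral_std_normal_moment_even[of 1] by simp

lemma phi_moment2:
  fixes b c :: "'a::euclidean_space"
  assumes b: "b \<in> Basis" and c: "c \<in> Basis"
  shows "integrable lborel (\<lambda>z::'a. gaussian_density 0 1 z * ((z \<bullet> b) * (z \<bullet> c)))"
    and "(\<integral>z. gaussian_density 0 1 z * ((z \<bullet> b) * (z \<bullet> c)) \<partial>(lborel::'a measure)) = (if b = c then 1 else 0)"
proof -
  define k where "k b' = (if b' = b then 1 else 0) + (if b' = c then 1 else 0::nat)" for b'
  have pw: "(\<Prod>b'\<in>Basis. (z \<bullet> b') ^ (if b' = a then 1 else 0)) = z \<bullet> a" if "a \<in> Basis" for a and z :: 'a
  proof -
    have "(\<Prod>b'\<in>Basis. (z \<bullet> b') ^ (if b' = a then 1 else 0)) = (\<Prod>b'\<in>Basis. if b' = a then z \<bullet> b' else 1)"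
      by (intro prod.cong) auto
    also have "\<dots> = z \<bullet> a" using that by (simp add: prod.delta)
    finally show ?thesis .
  qed
  have eq: "gaussian_density 0 1 z * ((z \<bullet> b) * (z \<bullet> c)) = (\<Prod>b'\<in>Basis. std_normal_density (z \<bullet> b') * (z \<bullet> b') ^ k b')" for z :: 'a
    unfolding gd_prod k_def power_add prod.distrib pw[OF b] pw[OF c] by simp
  show "integrable lborel (\<lambda>z::'a. gaussian_density 0 1 z * ((z \<bullet> b) * (z \<bullet> c)))"
    unfolding eq by (rule moment_prod)
  have "(\<integral>z. gaussian_density 0 1 z * ((z \<bullet> b) * (z \<bullet> c)) \<partial>(lborel::'a measure)) =
      (\<Prod>b'\<in>Basis. \<integral>x. std_normal_density x * x ^ k b' \<partial>lborel)"
    unfolding eq by (rule moment_prod)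
  also have "\<dots> = (if b = c then 1 else 0)"
  proof (cases "b = c")
    case True
    have "(\<Prod>b'\<in>Basis. \<integral>x. std_normal_density x * x ^ k b' \<partial>lborel) = (\<Prod>b'\<in>(Basis::'a set). 1)"
      by (intro prod.cong refl) (auto simp: k_def True std_m0 std_m2 std_m2[unfolded power2_eq_square])
    then show ?thesis using True by simp
  next
    case False
    have "k b = 1" using False by (simp add: k_def)
    hence "(\<integral>x. std_normal_density x * x ^ k b \<partial>lborel) = 0" using std_m1 by simp
    then show ?thesis using False b by (auto intro: prod_zero)
  qed
  finally show "(\<integral>z. gaussian_density 0 1 z * ((z \<bullet> b) * (z \<bullet> c)) \<partial>(lborel::'a measure)) = (if b = c then 1 else 0)" .
qed

lemma phi_int:
  shows "integrable lborel (gaussian_density (0::'a::euclidean_space) 1)"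
    and "(\<integral>z. gaussian_density 0 1 z \<partial>(lborel::'a measure)) = 1"
proof -
  have eq: "gaussian_density 0 1 z = (\<Prod>b'\<in>Basis. std_normal_density (z \<bullet> b') * (z \<bullet> b') ^ (\<lambda>_. 0) b')" for z :: 'a
    unfolding gd_prod by simp
  show "integrable lborel (gaussian_density (0::'a::euclidean_space) 1)"
    unfolding eq by (rule moment_prod)
  show "(\<integral>z. gaussian_density 0 1 z \<partial>(lborel::'a measure)) = 1"
    unfolding eq moment_prod(2) using std_m0 by simp
qed

lemma phi_inner_sq:
  fixes u :: "'a::euclidean_space"
  shows "integrable lborel (\<lambda>z::'a. gaussian_density 0 1 z * (u \<bullet> z)\<^sup>2)"
    and "(\<integral>z. gaussian_density 0 1 z * (u \<bullet> z)\<^sup>2 \<partial>(lborel::'a measure)) = (norm u)\<^sup>2"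
proof -
  have eq: "gaussian_density 0 1 z * (u \<bullet> z)\<^sup>2 =
     (\<Sum>b\<in>Basis. \<Sum>c\<in>Basis. (u \<bullet> b) * (u \<bullet> c) * (gaussian_density 0 1 z * ((z \<bullet> b) * (z \<bullet> c))))" for z :: 'a
  proof -
    have "(u \<bullet> z)\<^sup>2 = (\<Sum>b\<in>Basis. (u \<bullet> b) * (z \<bullet> b)) * (\<Sum>c\<in>Basis. (u \<bullet> c) * (z \<bullet> c))"
      by (simp add: power2_eq_square euclidean_inner[of u z])
    also have "\<dots> = (\<Sum>b\<in>Basis. \<Sum>c\<in>Basis. (u \<bullet> b) * (u \<bullet> c) * ((z \<bullet> b) * (z \<bullet> c)))"
      by (simp add: sum_product mult_ac)
    finally show ?thesis by (simp add: sum_distrib_left mult_ac)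
  qed
  show "integrable lborel (\<lambda>z::'a. gaussian_density 0 1 z * (u \<bullet> z)\<^sup>2)"
    unfolding eq by (intro Bochner_Integration.integrable_sum integrable_mult_right phi_moment2) auto
  have "(\<integral>z. gaussian_density 0 1 z * (u \<bullet> z)\<^sup>2 \<partial>(lborel::'a measure)) =
     (\<Sum>b\<in>Basis. \<Sum>c\<in>Basis. (u \<bullet> b) * (u \<bullet> c) * (if b = c then 1 else 0))"
    unfolding eq
    by (subst Bochner_Integration.integral_sum, (intro Bochner_Integration.integrable_sum integrable_mult_right phi_moment2; auto))
       (intro sum.cong refl, subst Bochner_Integration.integral_sum, (intro Bochner_Integration.integrable_sum integrable_mult_right phi_moment2; auto),
        intro sum.cong refl, simp add: phi_moment2)
  also have "\<dots> = (\<Sum>b\<in>Basis. (u \<bullet> b) * (u \<bullet> b))"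
    by (simp add: if_distrib cong: if_cong)
  also have "\<dots> = (norm u)\<^sup>2"
    by (simp add: power2_norm_eq_inner euclidean_inner[of u u])
  finally show "(\<integral>z. gaussian_density 0 1 z * (u \<bullet> z)\<^sup>2 \<partial>(lborel::'a measure)) = (norm u)\<^sup>2" .
qed

lemma phi_norm_sq:
  shows "integrable lborel (\<lambda>z::'a::euclidean_space. gaussian_density 0 1 z * (norm z)\<^sup>2)"
    and "(\<integral>z. gaussian_density 0 1 z * (norm z)\<^sup>2 \<partial>(lborel::'a measure)) = real DIM('a)"
proof -
  have eq: "gaussian_density 0 1 z * (norm z)\<^sup>2 = (\<Sum>b\<in>Basis. gaussian_density 0 1 z * ((z \<bullet> b) * (z \<bullet> b)))" for z :: 'a
    by (simp add: power2_norm_eq_inner euclidean_inner[of z z] sum_distrib_left)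
  show "integrable lborel (\<lambda>z::'a::euclidean_space. gaussian_density 0 1 z * (norm z)\<^sup>2)"
    unfolding eq by (intro Bochner_Integration.integrable_sum phi_moment2) auto
  show "(\<integral>z. gaussian_density 0 1 z * (norm z)\<^sup>2 \<partial>(lborel::'a measure)) = real DIM('a)"
    unfolding eq
    by (subst Bochner_Integration.integral_sum, (intro Bochner_Integration.integrable_sum phi_moment2; auto)) (simp add: phi_moment2)
qed



lemma near_norm:
  fixes \<theta> z :: "'a::euclidean_space"
  assumes "norm \<theta> > 1"
  shows "eventually (\<lambda>\<sigma>. norm (\<theta> + \<sigma> *\<^sub>R z) > 1) (at_right 0)"
proof -
  have "((\<lambda>\<sigma>. norm (\<theta> + \<sigma> *\<^sub>R z)) \<longlongrightarrow> norm (\<theta> + 0 *\<^sub>R z)) (at_right 0)"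
    by (intro tendsto_intros)
  hence "((\<lambda>\<sigma>. norm (\<theta> + \<sigma> *\<^sub>R z)) \<longlongrightarrow> norm \<theta>) (at_right 0)" by simp
  thus ?thesis using assms by (rule order_tendstoD)
qed

lemma diff_quot_identity:
  fixes \<theta> z :: "'a::euclidean_space"
  assumes s: "\<sigma> > 0" and N: "N > 0" and r: "r > 0"
  shows "(1/\<sigma>) *\<^sub>R ((1/N) *\<^sub>R (\<theta> + \<sigma> *\<^sub>R z) - (1/r) *\<^sub>R \<theta>)
       = (1/(r*N)) *\<^sub>R (r *\<^sub>R z - ((N - r)/\<sigma>) *\<^sub>R \<theta>)"
  by (rule euclidean_eqI) (use s N r in \<open>simp add: inner_diff_left inner_add_left field_simps\<close>)

lemma proj_deriv:
  fixes \<theta> z :: "'a::euclidean_space"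
  assumes r1: "norm \<theta> > 1"
  defines "u \<equiv> (1 / norm \<theta>) *\<^sub>R \<theta>"
  shows "((\<lambda>\<sigma>. (1/\<sigma>) *\<^sub>R (proj_C (\<theta> + \<sigma> *\<^sub>R z) - u)) \<longlongrightarrow>
          (1 / norm \<theta>) *\<^sub>R (z - (u \<bullet> z) *\<^sub>R u)) (at_right 0)"
proof -
  define r where "r = norm \<theta>"
  have r: "r > 1" using r1 by (simp add: r_def)
  define N where "N \<sigma> = norm (\<theta> + \<sigma> *\<^sub>R z)" for \<sigma>
  define D where "D \<sigma> = (2 * (\<theta> \<bullet> z) + \<sigma> * (norm z)\<^sup>2) / (N \<sigma> + r)" for \<sigma>
  have Nlim: "(N \<longlongrightarrow> r) (at_right 0)"
  proof -
    have "(N \<longlongrightarrow> norm (\<theta> + 0 *\<^sub>R z)) (at_right 0)" unfolding N_def by (intro tendsto_intros)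
    thus ?thesis by (simp add: r_def)
  qed
  have Dlim: "(D \<longlongrightarrow> (2 * (\<theta> \<bullet> z) + 0 * (norm z)\<^sup>2) / (r + r)) (at_right 0)"
    unfolding D_def using r by (intro tendsto_intros Nlim) auto
  have lim1: "((\<lambda>\<sigma>. (1/(r * N \<sigma>)) *\<^sub>R (r *\<^sub>R z - D \<sigma> *\<^sub>R \<theta>)) \<longlongrightarrow>
       (1/(r * r)) *\<^sub>R (r *\<^sub>R z - ((2 * (\<theta> \<bullet> z) + 0 * (norm z)\<^sup>2) / (r + r)) *\<^sub>R \<theta>)) (at_right 0)"
    using r by (intro tendsto_intros Nlim Dlim) auto
  have ur: "u = (1/r) *\<^sub>R \<theta>" by (simp add: u_def r_def)
  have val: "(1/(r * r)) *\<^sub>R (r *\<^sub>R z - ((2 * (\<theta> \<bullet> z) + 0 * (norm z)\<^sup>2) / (r + r)) *\<^sub>R \<theta>)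
      = (1 / norm \<theta>) *\<^sub>R (z - (u \<bullet> z) *\<^sub>R u)"
    unfolding r_def[symmetric] ur
    by (rule euclidean_eqI) (use r in \<open>simp add: inner_diff_left inner_add_left field_simps\<close>)
  have ev: "eventually (\<lambda>\<sigma>. (1/(r * N \<sigma>)) *\<^sub>R (r *\<^sub>R z - D \<sigma> *\<^sub>R \<theta>) =
       (1/\<sigma>) *\<^sub>R (proj_C (\<theta> + \<sigma> *\<^sub>R z) - u)) (at_right 0)"
    using near_norm[OF r1, of z] eventually_at_right_less[of 0]
  proof eventually_elim
    case (elim \<sigma>)
    hence s: "\<sigma> > 0" and N1: "N \<sigma> > 1" by (auto simp: N_def)
    have "(N \<sigma>)\<^sup>2 = r\<^sup>2 + \<sigma> * (2 * (\<theta> \<bullet> z) + \<sigma> * (norm z)\<^sup>2)"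
      unfolding N_def r_def power2_norm_eq_inner
      by (simp add: inner_add inner_commute algebra_simps power2_eq_square)
    hence "(N \<sigma> - r) * (N \<sigma> + r) = \<sigma> * (2 * (\<theta> \<bullet> z) + \<sigma> * (norm z)\<^sup>2)"
      by (simp add: algebra_simps power2_eq_square)
    hence Dq: "(N \<sigma> - r) / \<sigma> = D \<sigma>"
      using s N1 r unfolding D_def by (simp add: field_simps)
    have "(1/\<sigma>) *\<^sub>R (proj_C (\<theta> + \<sigma> *\<^sub>R z) - u) =
        (1/\<sigma>) *\<^sub>R ((1/N \<sigma>) *\<^sub>R (\<theta> + \<sigma> *\<^sub>R z) - (1/r) *\<^sub>R \<theta>)"
      using N1 by (simp add: proj_C_outside N_def u_def r_def)
    also have "\<dots> = (1/(r * N \<sigma>)) *\<^sub>R (r *\<^sub>R z - ((N \<sigma> - r)/\<sigma>) *\<^sub>R \<theta>)"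
      using s N1 r by (intro diff_quot_identity) auto
    finally show ?case unfolding Dq by simp
  qed
  show ?thesis
    using Lim_transform_eventually[OF lim1 ev] unfolding val .
qed



lemma B_identity:
  fixes p u :: "'a::euclidean_space"
  assumes "norm u = 1"
  shows "(norm (p - r *\<^sub>R u))\<^sup>2 - (r - 1)\<^sup>2 = (norm (p - u))\<^sup>2 + 2 * (r - 1) * (1 - p \<bullet> u)"
proof -
  have uu: "u \<bullet> u = 1" using assms by (simp add: dot_square_norm)
  show ?thesis
    unfolding power2_norm_eq_inner
    by (simp add: inner_diff_left inner_diff_right inner_commute uu algebra_simps power2_eq_square)
qed

lemma B_bound:
  fixes \<theta> z :: "'a::euclidean_space"
  assumes r1: "norm \<theta> > 1" and s: "\<sigma> > 0"
  defines "u \<equiv> (1 / norm \<theta>) *\<^sub>R \<theta>"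
  shows "0 \<le> (norm (proj_C (\<theta> + \<sigma> *\<^sub>R z) - \<theta>))\<^sup>2 - (norm \<theta> - 1)\<^sup>2"
    and "(norm (proj_C (\<theta> + \<sigma> *\<^sub>R z) - \<theta>))\<^sup>2 - (norm \<theta> - 1)\<^sup>2 \<le> (norm \<theta> + 3) * (\<sigma>\<^sup>2 * (norm z)\<^sup>2)"
proof -
  define r where "r = norm \<theta>"
  define p where "p = proj_C (\<theta> + \<sigma> *\<^sub>R z)"
  have r: "r > 1" using r1 by (simp add: r_def)
  have nu: "norm u = 1" using r1 by (auto simp: u_def)
  have th: "\<theta> = r *\<^sub>R u" using r by (simp add: u_def r_def)
  have pu: "proj_C \<theta> = u" using proj_C_outside[OF r1] by (simp add: u_def)
  have d: "norm (p - u) \<le> \<sigma> * norm z"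
    using proj_C_lip[of "\<theta> + \<sigma> *\<^sub>R z" \<theta>] s by (simp add: p_def pu dist_norm)
  have np: "norm p \<le> 1" by (simp add: p_def proj_C_in)
  have "p \<bullet> u \<le> norm p * norm u" by (rule norm_cauchy_schwarz)
  hence pu1: "p \<bullet> u \<le> 1" using np nu by simp
  have eq: "(norm (p - \<theta>))\<^sup>2 - (r - 1)\<^sup>2 = (norm (p - u))\<^sup>2 + 2 * (r - 1) * (1 - p \<bullet> u)"
    unfolding th by (rule B_identity[OF nu])
  show "0 \<le> (norm (proj_C (\<theta> + \<sigma> *\<^sub>R z) - \<theta>))\<^sup>2 - (norm \<theta> - 1)\<^sup>2"
    using eq r pu1 unfolding p_def[symmetric] r_def[symmetric] by simp
  have sq: "(norm (p - u))\<^sup>2 \<le> \<sigma>\<^sup>2 * (norm z)\<^sup>2"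
    using d by (metis norm_ge_zero power_mono power_mult_distrib)
  have "(norm (p - u))\<^sup>2 + 2 * (r - 1) * (1 - p \<bullet> u) \<le> (r + 3) * (\<sigma>\<^sup>2 * (norm z)\<^sup>2)"
  proof (cases "norm (\<theta> + \<sigma> *\<^sub>R z) > 1")
    case True
    have "norm p = 1" using True by (auto simp: p_def proj_C_outside)
    hence pp: "p \<bullet> p = 1" by (simp add: dot_square_norm)
    have uu: "u \<bullet> u = 1" using nu by (simp add: dot_square_norm)
    have e: "(norm (p - u))\<^sup>2 = 2 - 2 * (p \<bullet> u)"
      unfolding power2_norm_eq_inner
      by (simp add: inner_diff_left inner_diff_right inner_commute pp uu)
    have "(norm (p - u))\<^sup>2 + 2 * (r - 1) * (1 - p \<bullet> u) = r * (norm (p - u))\<^sup>2"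
      unfolding e by (simp add: algebra_simps)
    also have "\<dots> \<le> r * (\<sigma>\<^sup>2 * (norm z)\<^sup>2)" using sq r by simp
    also have "\<dots> \<le> (r + 3) * (\<sigma>\<^sup>2 * (norm z)\<^sup>2)"
      by (intro mult_right_mono) auto
    finally show ?thesis .
  next
    case False
    have "r - 1 \<le> norm \<theta> - norm (\<theta> + \<sigma> *\<^sub>R z)" using False by (simp add: r_def)
    also have "\<dots> \<le> norm (\<theta> - (\<theta> + \<sigma> *\<^sub>R z))" by (rule norm_triangle_ineq2)
    also have "\<dots> = norm (\<sigma> *\<^sub>R z)" by simp
    finally have r1': "r - 1 \<le> \<sigma> * norm z" using s by simp
    have "1 - p \<bullet> u = u \<bullet> (u - p)" using nu by (simp add: inner_diff_right inner_commute dot_square_norm)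
    also have "\<dots> \<le> norm u * norm (u - p)" by (rule norm_cauchy_schwarz)
    also have "\<dots> \<le> \<sigma> * norm z" using d nu by (simp add: norm_minus_commute)
    finally have q: "1 - p \<bullet> u \<le> \<sigma> * norm z" .
    have "2 * (r - 1) * (1 - p \<bullet> u) \<le> 2 * (\<sigma> * norm z) * (\<sigma> * norm z)"
      using r1' q r pu1 by (intro mult_mono) auto
    also have "\<dots> = 2 * (\<sigma>\<^sup>2 * (norm z)\<^sup>2)" by (simp add: power2_eq_square)
    finally have "(norm (p - u))\<^sup>2 + 2 * (r - 1) * (1 - p \<bullet> u) \<le> 3 * (\<sigma>\<^sup>2 * (norm z)\<^sup>2)"
      using sq by simp
    also have "\<dots> \<le> (r + 3) * (\<sigma>\<^sup>2 * (norm z)\<^sup>2)"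
      using r by (intro mult_right_mono) auto
    finally show ?thesis .
  qed
  thus "(norm (proj_C (\<theta> + \<sigma> *\<^sub>R z) - \<theta>))\<^sup>2 - (norm \<theta> - 1)\<^sup>2 \<le> (norm \<theta> + 3) * (\<sigma>\<^sup>2 * (norm z)\<^sup>2)"
    using eq unfolding p_def[symmetric] r_def[symmetric] by simp
qed



lemma B_outside:
  fixes \<theta> p :: "'a::euclidean_space"
  assumes r1: "norm \<theta> > 1" and np: "norm p = 1"
  shows "(norm (p - \<theta>))\<^sup>2 - (norm \<theta> - 1)\<^sup>2 = norm \<theta> * (norm (p - (1 / norm \<theta>) *\<^sub>R \<theta>))\<^sup>2"
proof -
  define r where "r = norm \<theta>"
  define u where "u = (1 / norm \<theta>) *\<^sub>R \<theta>"
  have r: "r > 1" using r1 by (simp add: r_def)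
  have nu: "norm u = 1" using r1 by (auto simp: u_def)
  have th: "\<theta> = r *\<^sub>R u" using r by (simp add: u_def r_def)
  have pp: "p \<bullet> p = 1" using np by (simp add: dot_square_norm)
  have uu: "u \<bullet> u = 1" using nu by (simp add: dot_square_norm)
  have e: "(norm (p - u))\<^sup>2 = 2 - 2 * (p \<bullet> u)"
    unfolding power2_norm_eq_inner
    by (simp add: inner_diff_left inner_diff_right inner_commute pp uu)
  have "(norm (p - \<theta>))\<^sup>2 - (r - 1)\<^sup>2 = (norm (p - u))\<^sup>2 + 2 * (r - 1) * (1 - p \<bullet> u)"
    unfolding th by (rule B_identity[OF nu])
  also have "\<dots> = r * (norm (p - u))\<^sup>2"
    unfolding e by (simp add: algebra_simps)
  finally show ?thesis by (simp add: r_def u_def)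
qed

lemma norm_sq_wz:
  fixes u z :: "'a::euclidean_space"
  assumes "norm u = 1"
  shows "(norm (z - (u \<bullet> z) *\<^sub>R u))\<^sup>2 = (norm z)\<^sup>2 - (u \<bullet> z)\<^sup>2"
proof -
  have uu: "u \<bullet> u = 1" using assms by (simp add: dot_square_norm)
  show ?thesis unfolding power2_norm_eq_inner
    by (simp add: inner_diff_left inner_diff_right inner_commute uu power2_eq_square algebra_simps)
qed



lemma lim_via_dom:
  fixes G :: "real \<Rightarrow> 'a::euclidean_space \<Rightarrow> real"
  assumes meas[measurable]: "\<And>\<sigma>. G \<sigma> \<in> borel_measurable lborel" and gm[measurable]: "g \<in> borel_measurable lborel"
    and Wi: "integrable lborel W"
    and pw: "\<And>z. ((\<lambda>\<sigma>. G \<sigma> z) \<longlongrightarrow> g z) (at_right 0)"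
    and bd: "\<And>\<sigma> z. \<sigma> > 0 \<Longrightarrow> \<bar>G \<sigma> z\<bar> \<le> W z"
  shows "((\<lambda>\<sigma>. integral\<^sup>L lborel (G \<sigma>)) \<longlongrightarrow> integral\<^sup>L lborel g) (at_right 0)"
  unfolding filterlim_at_right_to_top
proof (rule integral_dominated_convergence_at_top[where w=W])
  show "AE z in lborel. ((\<lambda>t. G (inverse t) z) \<longlongrightarrow> g z) at_top"
  proof (intro AE_I2)
    fix z show "((\<lambda>t. G (inverse t) z) \<longlongrightarrow> g z) at_top"
      using pw[of z] unfolding filterlim_at_right_to_top .
  qed
  show "\<forall>\<^sub>F t in at_top. AE z in lborel. norm (G (inverse t) z) \<le> W z"
    using eventually_gt_at_top[of "0::real"]
    by eventually_elim (intro AE_I2, simp add: bd)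
qed (use Wi in auto)

theorem proposition2:
  fixes \<theta> :: "'a::euclidean_space"
  assumes "\<theta> \<notin> unit_ball_C"
  shows "((\<lambda>\<sigma>. misspec_risk proj_C \<theta> \<sigma> / \<sigma>\<^sup>2) \<longlongrightarrow> (real DIM('a) - 1) / (norm \<theta>)\<^sup>2) (at_right 0) \<and>
         ((\<lambda>\<sigma>. excess_risk proj_C \<theta> \<sigma> / \<sigma>\<^sup>2) \<longlongrightarrow> (real DIM('a) - 1) / norm \<theta>) (at_right 0)"
proof -
  have r1: "norm \<theta> > 1" using assms by (auto simp: unit_ball_C_def)
  define r where "r = norm \<theta>"
  have r: "r > 1" using r1 by (simp add: r_def)
  define u where "u = (1 / norm \<theta>) *\<^sub>R \<theta>"
  have nu: "norm u = 1" using r1 by (auto simp: u_def)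
  have pu: "proj_C \<theta> = u" using proj_C_outside[OF r1] by (simp add: u_def)
  have ud: "(norm (u - \<theta>))\<^sup>2 = (r - 1)\<^sup>2"
  proof -
    have "u - \<theta> = (1 / r - 1) *\<^sub>R \<theta>" by (simp add: u_def r_def algebra_simps)
    hence "norm (u - \<theta>) = \<bar>1 / r - 1\<bar> * r" by (simp add: r_def)
    also have "\<dots> = r - 1" using r by (simp add: abs_if field_simps)
    finally show ?thesis by simp
  qed
  define \<phi> where "\<phi> = gaussian_density (0::'a) 1"
  have \<phi>_meas[measurable]: "\<phi> \<in> borel_measurable borel" unfolding \<phi>_def by measurable
  have \<phi>_nn: "\<phi> z \<ge> 0" for z unfolding \<phi>_def by (rule gd_nonneg)
  define F where "F \<sigma> z = \<phi> z * (norm ((1/\<sigma>) *\<^sub>R (proj_C (\<theta> + \<sigma> *\<^sub>R z) - u)))\<^sup>2" for \<sigma> z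
  define B where "B \<sigma> z = (norm (proj_C (\<theta> + \<sigma> *\<^sub>R z) - \<theta>))\<^sup>2 - (r - 1)\<^sup>2" for \<sigma> z
  define H where "H \<sigma> z = \<phi> z * (B \<sigma> z / \<sigma>\<^sup>2)" for \<sigma> z
  define W where "W z = \<phi> z * (norm z)\<^sup>2" for z
  define f where "f z = \<phi> z * (norm ((1 / norm \<theta>) *\<^sub>R (z - (u \<bullet> z) *\<^sub>R u)))\<^sup>2" for z
  have W_int: "integrable lborel W" unfolding W_def \<phi>_def by (rule phi_norm_sq)
  have \<phi>_int: "integrable lborel \<phi>" unfolding \<phi>_def by (rule phi_int)
  have F_meas[measurable]: "F \<sigma> \<in> borel_measurable borel" for \<sigma> unfolding F_def by measurable
  have B_meas[measurable]: "B \<sigma> \<in> borel_measurable borel" for \<sigma> unfolding B_def by measurable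
  have H_meas[measurable]: "H \<sigma> \<in> borel_measurable borel" for \<sigma> unfolding H_def by measurable
  have f_meas[measurable]: "f \<in> borel_measurable borel" unfolding f_def by measurable

  have Fv: "misspec_risk proj_C \<theta> \<sigma> / \<sigma>\<^sup>2 = integral\<^sup>L lborel (F \<sigma>)" if s: "\<sigma> > 0" for \<sigma>
  proof -
    have "misspec_risk proj_C \<theta> \<sigma> = (\<integral>z. \<phi> z * (norm (proj_C (\<theta> + \<sigma> *\<^sub>R z) - u))\<^sup>2 \<partial>lborel)"
      unfolding misspec_risk_def \<phi>_def pu by (rule gauss_change[OF s]) measurable
    moreover have "F \<sigma> = (\<lambda>z. \<phi> z * (norm (proj_C (\<theta> + \<sigma> *\<^sub>R z) - u))\<^sup>2 / \<sigma>\<^sup>2)"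
      using s by (intro ext) (simp add: F_def power_mult_distrib power_divide)
    ultimately show ?thesis by simp
  qed
  have Bb: "\<bar>H \<sigma> z\<bar> \<le> (r + 3) * W z" if s: "\<sigma> > 0" for \<sigma> z
  proof -
    have b0: "0 \<le> B \<sigma> z" and b1: "B \<sigma> z \<le> (r + 3) * (\<sigma>\<^sup>2 * (norm z)\<^sup>2)"
      using B_bound[OF r1 s, of z] by (simp_all add: B_def r_def)
    have "\<bar>H \<sigma> z\<bar> = \<phi> z * (B \<sigma> z / \<sigma>\<^sup>2)" using b0 \<phi>_nn by (simp add: H_def)
    also have "\<dots> \<le> \<phi> z * ((r + 3) * (norm z)\<^sup>2)"
      using s b1 \<phi>_nn by (intro mult_left_mono) (simp_all add: divide_le_eq algebra_simps)
    finally show ?thesis by (simp add: W_def algebra_simps)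
  qed
  have Hv: "excess_risk proj_C \<theta> \<sigma> / \<sigma>\<^sup>2 = integral\<^sup>L lborel (H \<sigma>)" if s: "\<sigma> > 0" for \<sigma>
  proof -
    have iB: "integrable lborel (\<lambda>z. \<phi> z * B \<sigma> z)"
    proof (rule Bochner_Integration.integrable_bound)
      show "integrable lborel (\<lambda>z. (r + 3) * \<sigma>\<^sup>2 * W z)" using W_int by simp
      show "AE z in lborel. norm (\<phi> z * B \<sigma> z) \<le> norm ((r + 3) * \<sigma>\<^sup>2 * W z)"
      proof (intro AE_I2)
        fix z
        have "\<bar>\<phi> z * B \<sigma> z\<bar> = \<sigma>\<^sup>2 * \<bar>H \<sigma> z\<bar>" using s by (simp add: H_def abs_mult)
        also have "\<dots> \<le> \<sigma>\<^sup>2 * ((r + 3) * W z)" using Bb[OF s] by (intro mult_left_mono) auto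
        also have "\<dots> \<le> \<bar>(r + 3) * \<sigma>\<^sup>2 * W z\<bar>" by (simp add: algebra_simps)
        finally show "norm (\<phi> z * B \<sigma> z) \<le> norm ((r + 3) * \<sigma>\<^sup>2 * W z)" by simp
      qed
    qed measurable
    have "(\<integral>y. (norm (proj_C y - \<theta>))\<^sup>2 \<partial>gaussian \<theta> \<sigma>) = (\<integral>z. \<phi> z * (norm (proj_C (\<theta> + \<sigma> *\<^sub>R z) - \<theta>))\<^sup>2 \<partial>lborel)"
      unfolding \<phi>_def by (rule gauss_change[OF s]) measurable
    also have "\<dots> = (\<integral>z. \<phi> z * B \<sigma> z + (r - 1)\<^sup>2 * \<phi> z \<partial>lborel)"
      by (simp add: B_def algebra_simps)
    also have "\<dots> = (\<integral>z. \<phi> z * B \<sigma> z \<partial>lborel) + (r - 1)\<^sup>2 * (\<integral>z. \<phi> z \<partial>lborel)"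
      using iB \<phi>_int by simp
    also have "(\<integral>z. \<phi> z \<partial>lborel) = 1" unfolding \<phi>_def by (rule phi_int)
    finally have "excess_risk proj_C \<theta> \<sigma> = (\<integral>z. \<phi> z * B \<sigma> z \<partial>lborel)"
      unfolding excess_risk_def pu ud by simp
    moreover have "H \<sigma> = (\<lambda>z. \<phi> z * B \<sigma> z / \<sigma>\<^sup>2)" by (intro ext) (simp add: H_def)
    ultimately show ?thesis by simp
  qed
  have fF: "((\<lambda>\<sigma>. F \<sigma> z) \<longlongrightarrow> f z) (at_right 0)" for z
  proof -
    have v: "((\<lambda>\<sigma>. (1/\<sigma>) *\<^sub>R (proj_C (\<theta> + \<sigma> *\<^sub>R z) - u)) \<longlongrightarrow>
          (1 / norm \<theta>) *\<^sub>R (z - (u \<bullet> z) *\<^sub>R u)) (at_right 0)"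
      using proj_deriv[OF r1, of z] unfolding u_def[symmetric] .
    show ?thesis unfolding F_def f_def
      by (intro tendsto_mult tendsto_const tendsto_power tendsto_norm v)
  qed
  have fH: "((\<lambda>\<sigma>. H \<sigma> z) \<longlongrightarrow> r * f z) (at_right 0)" for z
  proof -
    have "((\<lambda>\<sigma>. r * F \<sigma> z) \<longlongrightarrow> r * f z) (at_right 0)" by (intro tendsto_intros fF)
    moreover have "eventually (\<lambda>\<sigma>. r * F \<sigma> z = H \<sigma> z) (at_right 0)"
      using near_norm[OF r1, of z] eventually_at_right_less[of 0]
    proof eventually_elim
      case (elim \<sigma>)
      hence s: "\<sigma> > 0" and n1: "norm (\<theta> + \<sigma> *\<^sub>R z) > 1" by auto
      have np: "norm (proj_C (\<theta> + \<sigma> *\<^sub>R z)) = 1" using n1 by (auto simp: proj_C_outside)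
      have "B \<sigma> z = r * (norm (proj_C (\<theta> + \<sigma> *\<^sub>R z) - u))\<^sup>2"
        unfolding B_def r_def u_def by (rule B_outside[OF r1 np])
      thus ?case using s by (simp add: H_def F_def power_mult_distrib power_divide)
    qed
    ultimately show ?thesis by (rule Lim_transform_eventually)
  qed
  have Fb: "\<bar>F \<sigma> z\<bar> \<le> W z" if s: "\<sigma> > 0" for \<sigma> z
  proof -
    have "norm (proj_C (\<theta> + \<sigma> *\<^sub>R z) - u) \<le> \<sigma> * norm z"
      using proj_C_lip[of "\<theta> + \<sigma> *\<^sub>R z" \<theta>] s by (simp add: pu dist_norm)
    hence "norm ((1/\<sigma>) *\<^sub>R (proj_C (\<theta> + \<sigma> *\<^sub>R z) - u)) \<le> norm z"
      using s by (simp add: divide_le_eq mult.commute)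
    hence "(norm ((1/\<sigma>) *\<^sub>R (proj_C (\<theta> + \<sigma> *\<^sub>R z) - u)))\<^sup>2 \<le> (norm z)\<^sup>2"
      by (intro power_mono) auto
    thus ?thesis using \<phi>_nn[of z] by (simp add: F_def W_def abs_mult mult_left_mono)
  qed
  have intf: "integral\<^sup>L lborel f = (real DIM('a) - 1) / r\<^sup>2"
  proof -
    have "f = (\<lambda>z. (1 / r\<^sup>2) * (W z - \<phi> z * (u \<bullet> z)\<^sup>2))"
    proof (intro ext)
      fix z
      have "(norm ((1 / norm \<theta>) *\<^sub>R (z - (u \<bullet> z) *\<^sub>R u)))\<^sup>2 = (\<bar>1 / r\<bar>)\<^sup>2 * ((norm z)\<^sup>2 - (u \<bullet> z)\<^sup>2)"
        unfolding norm_scaleR power_mult_distrib norm_sq_wz[OF nu] r_def ..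
      also have "(\<bar>1 / r\<bar>)\<^sup>2 = 1 / r\<^sup>2" using r by (simp add: power_divide)
      finally have e: "(norm ((1 / norm \<theta>) *\<^sub>R (z - (u \<bullet> z) *\<^sub>R u)))\<^sup>2 = 1 / r\<^sup>2 * ((norm z)\<^sup>2 - (u \<bullet> z)\<^sup>2)" .
      show "f z = (1 / r\<^sup>2) * (W z - \<phi> z * (u \<bullet> z)\<^sup>2)"
        unfolding f_def W_def e by (simp add: algebra_simps)
    qed
    moreover have "integrable lborel (\<lambda>z. \<phi> z * (u \<bullet> z)\<^sup>2)" unfolding \<phi>_def by (rule phi_inner_sq)
    moreover have "(\<integral>z. \<phi> z * (u \<bullet> z)\<^sup>2 \<partial>lborel) = 1" unfolding \<phi>_def phi_inner_sq(2) nu by simp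
    moreover have "integral\<^sup>L lborel W = real DIM('a)" unfolding W_def \<phi>_def by (rule phi_norm_sq)
    ultimately show ?thesis using W_int by (simp add: divide_inverse)
  qed
  have L1: "((\<lambda>\<sigma>. integral\<^sup>L lborel (F \<sigma>)) \<longlongrightarrow> integral\<^sup>L lborel f) (at_right 0)"
    by (rule lim_via_dom[OF _ _ W_int fF Fb]) measurable
  have L2: "((\<lambda>\<sigma>. integral\<^sup>L lborel (H \<sigma>)) \<longlongrightarrow> integral\<^sup>L lborel (\<lambda>z. r * f z)) (at_right 0)"
    by (rule lim_via_dom[OF _ _ _ fH, where W="\<lambda>z. (r + 3) * W z"]) (use W_int Bb in auto)
  have e1: "eventually (\<lambda>\<sigma>. integral\<^sup>L lborel (F \<sigma>) = misspec_risk proj_C \<theta> \<sigma> / \<sigma>\<^sup>2) (at_right 0)"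
    using eventually_at_right_less[of 0] by eventually_elim (simp add: Fv)
  have e2: "eventually (\<lambda>\<sigma>. integral\<^sup>L lborel (H \<sigma>) = excess_risk proj_C \<theta> \<sigma> / \<sigma>\<^sup>2) (at_right 0)"
    using eventually_at_right_less[of 0] by eventually_elim (simp add: Hv)
  have v2: "integral\<^sup>L lborel (\<lambda>z. r * f z) = (real DIM('a) - 1) / norm \<theta>"
    using r by (simp add: intf r_def power2_eq_square)
  show ?thesis
    using Lim_transform_eventually[OF L1 e1] Lim_transform_eventually[OF L2 e2]
    unfolding intf v2 by (simp add: r_def)
qed

end
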